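(* Let $(A,B)$ be a Katsura pair such that $A$ has no zero rows, and let $(\mathbb{Z}\times E_A^0,E_A)$ be the associated action-restriction pair. Then its contraction coefficient is $$\rho=\limsup_{n\to\infty}\left(\max_{\mu\in E_A^n}\frac{|B_\mu|}{A_\mu}\right)^{1/n}.$$
   Context: Katsura pair: $N\in\mathbb{N}$, $A\in M_N(\mathbb{N})$ (nonnegative integers), $B\in M_N(\mathbb{Z})$ with $A_{ij}=0\Rightarrow B_{ij}=0$. Graph $E_A$: vertices $\{1,\dots,N\}$, edges $e_{i,j,m}$ ($0\le m<A_{ij}$), $r=i$, $s=j$; $E_A^n$ paths $\mu_1\cdots\mu_n$ of length $n$ with $s(\mu_t)=r(\mu_{t+1})$. For $\mu=e_{i_0,i_1,r_1}\cdots e_{i_{n-1},i_n,r_n}$, $A_\mu=\prod_tA_{i_ti_{t+1}}$, $B_\mu=\prod_tB_{i_ti_{t+1}}$. The action-restriction pair $(\mathbb{Z}\times E_A^0,E_A)$: the group bundle with elements $a_i^k$ ($a_i^ka_i^l=a_i^{k+l}$, domain = codomain $=i$) acts by $a_i^k\cdot e_{i,j,m}=e_{i,j,\hat m}$, $a_i^k|_{e_{i,j,m}}=a_j^{\hat k}$, $kB_{ij}+m=\hat kA_{ij}+\hat m$, $0\le\hat m<A_{ij}$, extended to paths by $g\cdot(e\nu)=(g\cdot e)(g|_e\cdot\nu)$, $g|_{e\nu}=(g|_e)|_\nu$. Contraction coefficient: for a finitely generated groupoid $G$ with finite symmetric generating set $S$ and word length $\ell_S$, acting via an action-restriction pair on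 a finite graph $E$, $\rho=\limsup_{n\to\infty}\left(\limsup_{g\in G,\ \ell_S(g)\to\infty}\max_{\mu\in d(g)E^n}\frac{\ell_S(g|_\mu)}{\ell_S(g)}\right)^{1/n}$ (it does not depend on $S$). For $\mathbb{Z}\times E_A^0$ one may take $S=\{a_i^{\pm1}\}$, so $\ell_S(a_i^k)=|k|$, and $\rho=\limsup_n\left(\limsup_{m\to\infty}\max_{\mu\in E_A^n}\frac{\ell_S(a^m_{r(\mu)}|_\mu)}{m}\right)^{1/n}$. *)

theory Defs
  imports "HOL-Analysis.Analysis"
begin

text \<open>Vertices of E_A are 0..N-1 (0-indexed). An edge e_{i,j,m} is the triple (i,j,m)
  with range r = i and source s = j.\<close>

type_synonym edge = "nat \<times> nat \<times> nat"

definition erng :: "edge \<Rightarrow> nat" where "erng e = fst e"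
definition esrc :: "edge \<Rightarrow> nat" where "esrc e = fst (snd e)"
definition eidx :: "edge \<Rightarrow> nat" where "eidx e = snd (snd e)"

definition katsura_pair :: "nat \<Rightarrow> (nat \<Rightarrow> nat \<Rightarrow> nat) \<Rightarrow> (nat \<Rightarrow> nat \<Rightarrow> int) \<Rightarrow> bool" where
  "katsura_pair N A B \<longleftrightarrow> (\<forall>i<N. \<forall>j<N. A i j = 0 \<longrightarrow> B i j = 0)"

definition no_zero_rows :: "nat \<Rightarrow> (nat \<Rightarrow> nat \<Rightarrow> nat) \<Rightarrow> bool" where
  "no_zero_rows N A \<longleftrightarrow> (\<forall>i<N. \<exists>j<N. A i j \<noteq> 0)"

definition edges :: "nat \<Rightarrow> (nat \<Rightarrow> nat \<Rightarrow> nat) \<Rightarrow> edge set" where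
  "edges N A = {(i, j, m). i < N \<and> j < N \<and> m < A i j}"

definition paths :: "nat \<Rightarrow> (nat \<Rightarrow> nat \<Rightarrow> nat) \<Rightarrow> nat \<Rightarrow> edge list set" where
  "paths N A n = {\<mu>. length \<mu> = n \<and> set \<mu> \<subseteq> edges N A \<and>
       (\<forall>t. Suc t < n \<longrightarrow> esrc (\<mu> ! t) = erng (\<mu> ! Suc t))}"

definition A_path :: "(nat \<Rightarrow> nat \<Rightarrow> nat) \<Rightarrow> edge list \<Rightarrow> nat" where
  "A_path A \<mu> = prod_list (map (\<lambda>e. A (erng e) (esrc e)) \<mu>)"

definition B_path :: "(nat \<Rightarrow> nat \<Rightarrow> int) \<Rightarrow> edge list \<Rightarrow> int" where
  "B_path B \<mu> = prod_list (map (\<lambda>e. B (erng e) (esrc e)) \<mu>)"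

text \<open>Restriction a_i^k |_{e_{i,j,m}} = a_j^{khat} where k B_ij + m = khat A_ij + mhat,
  0 <= mhat < A_ij, i.e. khat = floor((k B_ij + m) / A_ij).\<close>
definition restr_edge :: "(nat \<Rightarrow> nat \<Rightarrow> nat) \<Rightarrow> (nat \<Rightarrow> nat \<Rightarrow> int) \<Rightarrow> int \<Rightarrow> edge \<Rightarrow> int" where
  "restr_edge A B k e = (k * B (erng e) (esrc e) + int (eidx e)) div int (A (erng e) (esrc e))"

text \<open>g|_{e nu} = (g|_e)|_nu; the exponent of a_{r(mu)}^k |_mu.\<close>
definition restr_path :: "(nat \<Rightarrow> nat \<Rightarrow> nat) \<Rightarrow> (nat \<Rightarrow> nat \<Rightarrow> int) \<Rightarrow> int \<Rightarrow> edge list \<Rightarrow> int" where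
  "restr_path A B k \<mu> = foldl (restr_edge A B) k \<mu>"

definition eroot :: "nat \<Rightarrow> ereal \<Rightarrow> ereal" where
  "eroot n x = (if x = \<infinity> then \<infinity> else ereal (real_of_ereal x powr (1 / real n)))"

text \<open>Contraction coefficient, with S = {a_i^{+-1}}, word length |k|:
  limsup_n ( limsup_{|k| \<rightarrow> \<infinity>} max_{mu in E^n} |k'| / |k| )^{1/n}, where the max ranges over
  all g = a_i^k with word length |k| (all vertices i) and all mu in d(g) E^n.\<close>
definition contraction_coeff :: "nat \<Rightarrow> (nat \<Rightarrow> nat \<Rightarrow> nat) \<Rightarrow> (nat \<Rightarrow> nat \<Rightarrow> int) \<Rightarrow> ereal" where
  "contraction_coeff N A B =
     limsup (\<lambda>n. eroot n
       (Limsup (sup at_top at_bot)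
          (\<lambda>k::int. ereal (Max ((\<lambda>\<mu>. real_of_int \<bar>restr_path A B k \<mu>\<bar> / real_of_int \<bar>k\<bar>) ` paths N A n)))))"

end

theory Submission
  imports Defs
begin

lemma edge_err:
  assumes "e \<in> edges N A"
  shows "\<bar>real_of_int (restr_edge A B k e) - real_of_int k * real_of_int (B (erng e) (esrc e)) / real (A (erng e) (esrc e))\<bar> < 1"
proof -
  obtain i j m where e: "e = (i, j, m)" and m: "m < A i j"
    using assms unfolding edges_def by auto
  define a where "a = A i j"
  have apos: "a > 0" using m a_def by simp
  define x where "x = k * B i j + int m"
  have rd: "restr_edge A B k e = \<lfloor>real_of_int x / real_of_int (int a)\<rfloor>"
    unfolding restr_edge_def e erng_def esrc_def eidx_def x_def a_def
    by (simp only: floor_divide_of_int_eq fst_conv snd_conv)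
  have f1: "real_of_int \<lfloor>real_of_int x / real a\<rfloor> \<le> real_of_int x / real a" by simp
  have f2: "real_of_int x / real a - 1 < real_of_int \<lfloor>real_of_int x / real a\<rfloor>" by linarith
  have xe: "real_of_int x / real a = real_of_int k * real_of_int (B i j) / real a + real m / real a"
    unfolding x_def using apos by (simp add: field_simps)
  have m1: "real m / real a < 1" using m apos a_def by simp
  have m0: "0 \<le> real m / real a" by simp
  have r: "real_of_int (restr_edge A B k e) = real_of_int \<lfloor>real_of_int x / real a\<rfloor>" using rd by simp
  have goal: "\<bar>real_of_int (restr_edge A B k e) - real_of_int k * real_of_int (B i j) / real a\<bar> < 1"
    using r f1 f2 xe m1 m0 unfolding abs_less_iff by linarith
  then show ?thesis by (simp add: e erng_def esrc_def a_def)
qed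

lemma path_err:
  assumes "set \<mu> \<subseteq> edges N A"
  shows "\<exists>C\<ge>0. \<forall>k. \<bar>real_of_int (restr_path A B k \<mu>) - real_of_int k * real_of_int (B_path B \<mu>) / real (A_path A \<mu>)\<bar> \<le> C"
  using assms
proof (induction \<mu>)
  case Nil
  then show ?case by (auto simp: restr_path_def B_path_def A_path_def)
next
  case (Cons e \<mu>)
  then obtain C where C0: "C \<ge> 0" and C: "\<And>k. \<bar>real_of_int (restr_path A B k \<mu>) - real_of_int k * real_of_int (B_path B \<mu>) / real (A_path A \<mu>)\<bar> \<le> C"
    by auto
  have ee: "e \<in> edges N A" using Cons by auto
  define re where "re = real_of_int (B (erng e) (esrc e)) / real (A (erng e) (esrc e))"
  define rm where "rm = real_of_int (B_path B \<mu>) / real (A_path A \<mu>)"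
  have rr: "real_of_int (B_path B (e#\<mu>)) / real (A_path A (e#\<mu>)) = re * rm"
    unfolding re_def rm_def B_path_def A_path_def by simp
  have rp: "restr_path A B k (e#\<mu>) = restr_path A B (restr_edge A B k e) \<mu>" for k
    unfolding restr_path_def by simp
  show ?case
  proof (intro exI[of _ "C + \<bar>rm\<bar>"] conjI allI)
    show "0 \<le> C + \<bar>rm\<bar>" using C0 by simp
    fix k
    define k' where "k' = restr_edge A B k e"
    have h1: "\<bar>real_of_int (restr_path A B k' \<mu>) - real_of_int k' * rm\<bar> \<le> C"
      using C[of k'] unfolding rm_def by simp
    have h2: "\<bar>real_of_int k' - real_of_int k * re\<bar> < 1"
      using edge_err[OF ee, of B k] unfolding k'_def re_def by simp
    have h3: "\<bar>real_of_int k' * rm - real_of_int k * re * rm\<bar> \<le> \<bar>rm\<bar>"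
    proof -
      have "\<bar>real_of_int k' * rm - real_of_int k * re * rm\<bar> = \<bar>real_of_int k' - real_of_int k * re\<bar> * \<bar>rm\<bar>"
        by (simp add: abs_mult[symmetric] algebra_simps)
      also have "\<dots> \<le> 1 * \<bar>rm\<bar>" using h2 by (intro mult_right_mono) auto
      finally show ?thesis by simp
    qed
    show "\<bar>real_of_int (restr_path A B k (e#\<mu>)) - real_of_int k * real_of_int (B_path B (e#\<mu>)) / real (A_path A (e#\<mu>))\<bar> \<le> C + \<bar>rm\<bar>"
      unfolding rp k'_def[symmetric] using h1 h3
      by (simp only: rr times_divide_eq_right[symmetric] mult.assoc[symmetric])
  qed
qed

lemma conv_one:
  fixes f :: "int \<Rightarrow> int" and r C :: real
  assumes C: "\<And>k. \<bar>real_of_int (f k) - real_of_int k * r\<bar> \<le> C"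
  shows "((\<lambda>k. real_of_int \<bar>f k\<bar> / real_of_int \<bar>k\<bar>) \<longlongrightarrow> \<bar>r\<bar>) (sup at_top at_bot)"
proof (rule tendstoI)
  fix \<epsilon> :: real assume ep: "\<epsilon> > 0"
  define M :: int where "M = \<lceil>\<bar>C\<bar> / \<epsilon>\<rceil> + 1"
  have key: "dist (real_of_int \<bar>f k\<bar> / real_of_int \<bar>k\<bar>) \<bar>r\<bar> < \<epsilon>" if "\<bar>k\<bar> \<ge> M" for k
  proof -
    have kM: "real_of_int \<bar>k\<bar> > \<bar>C\<bar> / \<epsilon>" using that unfolding M_def by linarith
    have kpos: "real_of_int \<bar>k\<bar> > 0"
      using kM ep by (smt (verit) divide_nonneg_pos abs_ge_zero)
    have "\<bar>real_of_int \<bar>f k\<bar> / real_of_int \<bar>k\<bar> - \<bar>r\<bar>\<bar> = \<bar>real_of_int \<bar>f k\<bar> - \<bar>real_of_int k * r\<bar>\<bar> / real_of_int \<bar>k\<bar>"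
      using kpos by (simp add: field_simps abs_mult)
    also have "\<dots> \<le> \<bar>C\<bar> / real_of_int \<bar>k\<bar>"
      using C[of k] kpos by (intro divide_right_mono) (auto simp: abs_le_iff abs_if split: if_splits)
    also have "\<dots> < \<epsilon>" using kM kpos ep by (simp add: field_simps)
    finally show ?thesis by (simp add: dist_real_def)
  qed
  show "eventually (\<lambda>k. dist (real_of_int \<bar>f k\<bar> / real_of_int \<bar>k\<bar>) \<bar>r\<bar> < \<epsilon>) (sup at_top at_bot)"
    unfolding eventually_sup
  proof
    show "eventually (\<lambda>k. dist (real_of_int \<bar>f k\<bar> / real_of_int \<bar>k\<bar>) \<bar>r\<bar> < \<epsilon>) at_top"
      unfolding eventually_at_top_linorder
      by (rule exI[of _ M]) (use key M_def ep in auto)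
    show "eventually (\<lambda>k. dist (real_of_int \<bar>f k\<bar> / real_of_int \<bar>k\<bar>) \<bar>r\<bar> < \<epsilon>) at_bot"
      unfolding eventually_at_bot_linorder
      by (rule exI[of _ "-M"]) (use key M_def ep in auto)
  qed
qed

lemma tendsto_Max_fin:
  fixes g :: "'a \<Rightarrow> 'b \<Rightarrow> real"
  assumes "finite S" "S \<noteq> {}" "\<And>x. x \<in> S \<Longrightarrow> ((g x) \<longlongrightarrow> L x) F"
  shows "((\<lambda>k. Max ((\<lambda>x. g x k) ` S)) \<longlongrightarrow> Max (L ` S)) F"
  using assms
proof (induction S rule: finite_ne_induct)
  case (singleton x)
  then show ?case by simp
next
  case (insert x S)
  have "((\<lambda>k. max (g x k) (Max ((\<lambda>x. g x k) ` S))) \<longlongrightarrow> max (L x) (Max (L ` S))) F"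
    using insert by (intro tendsto_max) auto
  then show ?case using insert by simp
qed

lemma finite_edges: "finite (edges N A)"
proof -
  have "edges N A \<subseteq> {..<N} \<times> {..<N} \<times> {..<Max {A i j | i j. i < N \<and> j < N}}"
  proof
    fix e assume "e \<in> edges N A"
    then obtain i j m where e: "e = (i,j,m)" "i < N" "j < N" "m < A i j" unfolding edges_def by auto
    have "A i j \<le> Max {A i j | i j. i < N \<and> j < N}"
    proof (rule Max_ge)
      have "{A i j | i j. i < N \<and> j < N} = (\<lambda>(i,j). A i j) ` ({..<N} \<times> {..<N})" by auto
      then show "finite {A i j | i j. i < N \<and> j < N}" by simp
    qed (use e in auto)
    then show "e \<in> {..<N} \<times> {..<N} \<times> {..<Max {A i j | i j. i < N \<and> j < N}}" using e by auto
  qed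
  then show ?thesis by (rule finite_subset) auto
qed

lemma finite_paths: "finite (paths N A n)"
proof -
  have "paths N A n \<subseteq> {xs. set xs \<subseteq> edges N A \<and> length xs = n}" unfolding paths_def by auto
  then show ?thesis using finite_lists_length_eq[OF finite_edges] finite_subset by blast
qed

theorem proposition3p4:
  fixes N :: nat and A :: "nat \<Rightarrow> nat \<Rightarrow> nat" and B :: "nat \<Rightarrow> nat \<Rightarrow> int"
  assumes "0 < N"
    and "katsura_pair N A B"
    and "no_zero_rows N A"
  shows "contraction_coeff N A B =
    limsup (\<lambda>n. ereal ((Max ((\<lambda>\<mu>. real_of_int \<bar>B_path B \<mu>\<bar> / real (A_path A \<mu>)) ` paths N A n))
                         powr (1 / real n)))"
  unfolding contraction_coeff_def
proof (rule arg_cong[where f = limsup], rule ext)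
  fix n
  let ?F = "sup at_top at_bot :: int filter"
  have Fnb: "?F \<noteq> bot" by (simp add: sup_eq_bot_iff)
  define L where "L = Max ((\<lambda>\<mu>. real_of_int \<bar>B_path B \<mu>\<bar> / real (A_path A \<mu>)) ` paths N A n)"
  have lim: "((\<lambda>k::int. Max ((\<lambda>\<mu>. real_of_int \<bar>restr_path A B k \<mu>\<bar> / real_of_int \<bar>k\<bar>) ` paths N A n)) \<longlongrightarrow> L) ?F"
  proof (cases "paths N A n = {}")
    case True
    then show ?thesis unfolding L_def by simp
  next
    case False
    have "((\<lambda>k::int. Max ((\<lambda>\<mu>. real_of_int \<bar>restr_path A B k \<mu>\<bar> / real_of_int \<bar>k\<bar>) ` paths N A n))
       \<longlongrightarrow> Max ((\<lambda>\<mu>. \<bar>real_of_int (B_path B \<mu>) / real (A_path A \<mu>)\<bar>) ` paths N A n)) ?F"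
    proof (rule tendsto_Max_fin[OF finite_paths False])
      fix \<mu> assume "\<mu> \<in> paths N A n"
      then have "set \<mu> \<subseteq> edges N A" unfolding paths_def by auto
      from path_err[OF this, of B] obtain C where
        "\<And>k. \<bar>real_of_int (restr_path A B k \<mu>) - real_of_int k * (real_of_int (B_path B \<mu>) / real (A_path A \<mu>))\<bar> \<le> C"
        by auto
      from conv_one[where f = "\<lambda>k. restr_path A B k \<mu>", OF this]
      show "((\<lambda>k. real_of_int \<bar>restr_path A B k \<mu>\<bar> / real_of_int \<bar>k\<bar>) \<longlongrightarrow> \<bar>real_of_int (B_path B \<mu>) / real (A_path A \<mu>)\<bar>) ?F" .
    qed
    moreover have "(\<lambda>\<mu>. \<bar>real_of_int (B_path B \<mu>) / real (A_path A \<mu>)\<bar>) = (\<lambda>\<mu>. real_of_int \<bar>B_path B \<mu>\<bar> / real (A_path A \<mu>))"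
      by (simp add: abs_divide)
    ultimately show ?thesis unfolding L_def by simp
  qed
  have "Limsup ?F (\<lambda>k::int. ereal (Max ((\<lambda>\<mu>. real_of_int \<bar>restr_path A B k \<mu>\<bar> / real_of_int \<bar>k\<bar>) ` paths N A n))) = ereal L"
    by (rule lim_imp_Limsup[OF Fnb]) (use lim in \<open>simp add: tendsto_ereal\<close>)
  then show "eroot n (Limsup ?F (\<lambda>k::int. ereal (Max ((\<lambda>\<mu>. real_of_int \<bar>restr_path A B k \<mu>\<bar> / real_of_int \<bar>k\<bar>) ` paths N A n))))
      = ereal (L powr (1 / real n))"
    by (simp add: eroot_def)
qed

end
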